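(* Let $\alpha\in(1,2)$ and let $X_1$ be a random variable with characteristic function $\mathbb{E}e^{itX_1}=\exp\left(\int_0^1(e^{itx}-1-itx)\frac{dx}{x^{\alpha+1}}\right)$. Put $A_\alpha=\frac{1}{2-\alpha}+\frac{1}{\alpha-1}$. Then for every $y\ge\frac{2}{2-\alpha}$, $$\mathbb{P}(X_1\le-y)\le\exp\left(-\frac{\left(\frac12\left(y+\frac{1}{\alpha-1}\right)\right)^{\alpha/(\alpha-1)}}{A_\alpha^{1/(\alpha-1)}}\right)$$ and $$\mathbb{P}\Big(X_1\le-\Big(\frac1e-\frac14\Big)y\Big)\ge\Big(1-\frac{1}{\sqrt e}\Big)^2\exp\left(-\frac{\left(\sqrt{4-\frac2e}\left(y+\frac{1}{\alpha-1}\right)\right)^{\alpha/(\alpha-1)}}{A_\alpha^{1/(\alpha-1)}}\right).$$ *)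

theory Defs
  imports "HOL-Probability.Probability"
begin

end

theory Submission
  imports Defs "HOL-Complex_Analysis.Complex_Analysis"
begin

lemma holo_param_integral:
  fixes f :: "complex \<Rightarrow> 'a \<Rightarrow> complex" and N :: "'a measure"
  assumes meas: "\<And>s. (\<lambda>x. f s x) \<in> borel_measurable N"
  assumes holo: "\<And>x. x \<in> space N \<Longrightarrow> (\<lambda>s. f s x) holomorphic_on UNIV"
  assumes bound: "\<And>R. \<exists>G. integrable N G \<and> (\<forall>x\<in>space N. \<forall>s. norm s \<le> R \<longrightarrow> norm (f s x) \<le> G x)"
  shows "(\<lambda>s. \<integral>x. f s x \<partial>N) holomorphic_on UNIV"
proof -
  have intg: "integrable N (\<lambda>x. f s x)" for s
  proof -
    obtain G where G: "integrable N G" "\<forall>x\<in>space N. \<forall>s'. norm s' \<le> norm s \<longrightarrow> norm (f s' x) \<le> G x"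
      using bound[of "norm s"] by blast
    show ?thesis
      by (rule Bochner_Integration.integrable_bound[OF G(1) meas])
         (use G(2) in \<open>auto intro!: AE_I2 order_trans[OF _ abs_ge_self]\<close>)
  qed
  have "(\<lambda>s. \<integral>x. f s x \<partial>N) field_differentiable (at s0)" for s0
  proof -
    obtain G where G: "integrable N G" and Gb: "\<forall>x\<in>space N. \<forall>s. norm s \<le> norm s0 + 2 \<longrightarrow> norm (f s x) \<le> G x"
      using bound[of "norm s0 + 2"] by blast
    define D where "D x = deriv (\<lambda>s. f s x) s0" for x
    have hasd: "((\<lambda>s. f s x) has_field_derivative deriv (\<lambda>s. f s x) w) (at w)" if "x \<in> space N" for x w
      using holo[OF that] by (meson UNIV_I holomorphic_derivI open_UNIV)
    have dbound: "norm (deriv (\<lambda>s. f s x) w) \<le> G x" if x: "x \<in> space N" and w: "norm (w - s0) \<le> 1" for x w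
    proof -
      have "norm ((deriv ^^ 1) (\<lambda>s. f s x) w) \<le> fact 1 * G x / 1 ^ 1"
      proof (rule Cauchy_inequality)
        show "(\<lambda>s. f s x) holomorphic_on ball w 1"
          using holo[OF x] by (rule holomorphic_on_subset) auto
        show "continuous_on (cball w 1) (\<lambda>s. f s x)"
          using holo[OF x] holomorphic_on_imp_continuous_on continuous_on_subset by blast
        show "norm (f v x) \<le> G x" if "norm (w - v) = 1" for v
        proof -
          have "v = s0 + (w - s0) - (w - v)" by simp
          then have "norm v \<le> norm s0 + norm (w - s0) + norm (w - v)"
            using norm_triangle_ineq4[of "s0 + (w - s0)" "w - v"] norm_triangle_ineq[of s0 "w - s0"] by simp
          then have "norm v \<le> norm s0 + 2" using w that by linarith
          then show ?thesis using Gb x by blast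
        qed
      qed auto
      then show ?thesis by simp
    qed
    have lip: "norm (f s x - f s0 x) \<le> G x * norm (s - s0)" if x: "x \<in> space N" and s: "norm (s - s0) \<le> 1" for x s
    proof (rule field_differentiable_bound[where S="cball s0 1" and f'="\<lambda>w. deriv (\<lambda>s. f s x) w"])
      show "((\<lambda>s. f s x) has_field_derivative deriv (\<lambda>s. f s x) w) (at w within cball s0 1)" for w
        using hasd[OF x] has_field_derivative_at_within by blast
      show "norm (deriv (\<lambda>s. f s x) w) \<le> G x" if "w \<in> cball s0 1" for w
        using dbound[OF x] that by (simp add: dist_norm norm_minus_commute)
    qed (use s in \<open>auto simp: dist_norm norm_minus_commute\<close>)
    have Dmeas: "D \<in> borel_measurable N"
    proof (rule borel_measurable_LIMSEQ_metric[where f="\<lambda>n x. (f (s0 + 1 / of_nat (Suc n)) x - f s0 x) / ((s0 + 1 / of_nat (Suc n)) - s0)"])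
      show "(\<lambda>x. (f (s0 + 1 / of_nat (Suc n)) x - f s0 x) / ((s0 + 1 / of_nat (Suc n)) - s0)) \<in> borel_measurable N" for n
        using meas by (intro borel_measurable_divide borel_measurable_diff) auto
      show "(\<lambda>n. (f (s0 + 1 / of_nat (Suc n)) x - f s0 x) / ((s0 + 1 / of_nat (Suc n)) - s0)) \<longlonglongrightarrow> D x"
        if "x \<in> space N" for x
      proof -
        have H: "((\<lambda>s. (f s x - f s0 x) / (s - s0)) \<longlongrightarrow> D x) (at s0)"
          using hasd[OF that, of s0] unfolding D_def has_field_derivative_iff .
        have H2: "(\<lambda>n. s0 + 1 / of_nat (Suc n) :: complex) \<longlonglongrightarrow> s0"
          using tendsto_add[OF tendsto_const LIMSEQ_Suc[OF lim_1_over_n], of s0] by simp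
        have H3: "\<forall>n. s0 + 1 / of_nat (Suc n) \<in> UNIV - {s0::complex}" by (simp add: of_nat_neq_0 del: of_nat_Suc)
        have "((\<lambda>s. (f s x - f s0 x) / (s - s0)) \<circ> (\<lambda>n. s0 + 1 / of_nat (Suc n))) \<longlonglongrightarrow> D x"
          using H unfolding tendsto_at_iff_sequentially by (elim allE impE) (use H2 H3 in \<open>simp_all only: simp_thms\<close>)
        then show ?thesis by (simp only: o_def)
      qed
    qed
    have "((\<lambda>s. \<integral>x. f s x \<partial>N) has_field_derivative (\<integral>x. D x \<partial>N)) (at s0)"
      unfolding has_field_derivative_iff tendsto_at_iff_sequentially
    proof (intro allI impI)
      fix X :: "nat \<Rightarrow> complex" assume X: "\<forall>i. X i \<in> UNIV - {s0}" "X \<longlonglongrightarrow> s0"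
      obtain n0 where n0: "\<And>n. n \<ge> n0 \<Longrightarrow> dist (X n) s0 < 1"
        using X(2) unfolding LIMSEQ_def by (meson zero_less_one)
      define Y where "Y n = X (n + n0)" for n
      have Y1: "norm (Y n - s0) \<le> 1" for n using n0[of "n + n0"] by (simp add: Y_def dist_norm)
      have Yne: "Y n \<noteq> s0" for n using X(1) by (auto simp: Y_def)
      have YL: "Y \<longlonglongrightarrow> s0" using X(2) LIMSEQ_ignore_initial_segment unfolding Y_def by blast
      define q where "q n x = (f (Y n) x - f s0 x) / (Y n - s0)" for n x
      have "(\<lambda>n. \<integral>x. q n x \<partial>N) \<longlonglongrightarrow> (\<integral>x. D x \<partial>N)"
      proof (rule integral_dominated_convergence[where w=G])
        show "q n \<in> borel_measurable N" for n unfolding q_def using meas by (intro borel_measurable_divide borel_measurable_diff) auto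
        show "D \<in> borel_measurable N" by (rule Dmeas)
        show "integrable N G" by (rule G)
        show "AE x in N. (\<lambda>n. q n x) \<longlonglongrightarrow> D x"
        proof (rule AE_I2)
          fix x assume x: "x \<in> space N"
          have "((\<lambda>s. (f s x - f s0 x) / (s - s0)) \<longlongrightarrow> D x) (at s0)"
            using hasd[OF x, of s0] unfolding D_def has_field_derivative_iff .
          then show "(\<lambda>n. q n x) \<longlonglongrightarrow> D x"
            unfolding tendsto_at_iff_sequentially q_def using Yne YL by (auto simp: o_def)
        qed
        show "AE x in N. norm (q n x) \<le> G x" for n
        proof (rule AE_I2)
          fix x assume x: "x \<in> space N"
          have "norm (f (Y n) x - f s0 x) \<le> G x * norm (Y n - s0)" by (rule lip[OF x Y1])
          then show "norm (q n x) \<le> G x" using Yne[of n]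
            by (simp add: q_def norm_divide divide_le_eq)
        qed
      qed
      moreover have "(\<integral>x. q n x \<partial>N) = ((\<integral>x. f (Y n) x \<partial>N) - (\<integral>x. f s0 x \<partial>N)) / (Y n - s0)" for n
        unfolding q_def by (simp add: intg)
      ultimately have "(\<lambda>n. ((\<integral>x. f (Y n) x \<partial>N) - (\<integral>x. f s0 x \<partial>N)) / (Y n - s0)) \<longlonglongrightarrow> (\<integral>x. D x \<partial>N)"
        by simp
      then show "((\<lambda>s. ((\<integral>x. f s x \<partial>N) - (\<integral>x. f s0 x \<partial>N)) / (s - s0)) \<circ> X) \<longlonglongrightarrow> (\<integral>x. D x \<partial>N)"
        unfolding Y_def o_def by (rule LIMSEQ_offset)
    qed
    then show ?thesis unfolding field_differentiable_def by blast
  qed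
  then show ?thesis unfolding holomorphic_on_def using field_differentiable_at_within by blast
qed

lemma norm_exp_minus_1_minus:
  fixes z :: complex
  shows "norm (exp z - 1 - z) \<le> norm z ^ 2 * exp (norm z)"
proof -
  have sums: "(\<lambda>k. z ^ (k + 2) /\<^sub>R fact (k + 2)) sums (exp z - (\<Sum>k<2. z ^ k /\<^sub>R fact k))"
    by (intro sums_split_initial_segment exp_converges)
  have sumn: "summable (\<lambda>k. norm (z ^ (k + 2) /\<^sub>R fact (k + 2)))"
    using summable_ignore_initial_segment[OF summable_norm_exp[of z], of 2] by simp
  have eqA: "norm (z ^ (k + 2) /\<^sub>R fact (k + 2)) = norm z ^ (k + 2) / fact (k + 2)" for k
    unfolding norm_scaleR norm_power by (simp add: divide_inverse mult.commute)
  have eqn: "norm (z ^ (k + 2) /\<^sub>R fact (k + 2)) = norm z ^ 2 * (norm z ^ k / fact (k + 2))" for k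
    unfolding eqA by (simp only: power_add mult.commute times_divide_eq_right)
  have "exp z - 1 - z = (\<Sum>k. z ^ (k + 2) /\<^sub>R fact (k + 2))"
    using sums by (simp add: sums_iff eval_nat_numeral)
  also have "norm \<dots> \<le> (\<Sum>k. norm (z ^ (k + 2) /\<^sub>R fact (k + 2)))"
    using sumn by (rule summable_norm)
  also have "\<dots> = (\<Sum>k. norm z ^ 2 * (norm z ^ k / fact (k + 2)))"
    by (simp only: eqn)
  also have "\<dots> \<le> (\<Sum>k. norm z ^ 2 * (norm z ^ k / fact k))"
  proof (rule suminf_le)
    show "norm z ^ 2 * (norm z ^ k / fact (k + 2)) \<le> norm z ^ 2 * (norm z ^ k / fact k)" for k
      by (intro mult_left_mono divide_left_mono fact_mono) auto
    show "summable (\<lambda>k. norm z ^ 2 * (norm z ^ k / fact (k + 2)))"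
      using sumn by (simp only: eqn)
    show "summable (\<lambda>k. norm z ^ 2 * (norm z ^ k / fact k))"
      using summable_exp[of "norm z"] by (intro summable_mult) (simp add: divide_inverse mult.commute)
  qed
  also have "\<dots> = norm z ^ 2 * exp (norm z)"
  proof -
    have s1: "(\<lambda>k. norm z ^ k / fact k) sums exp (norm z)"
      using exp_converges[of "norm z"] by (simp add: divide_inverse mult.commute)
    show ?thesis using sums_unique[OF sums_mult[OF s1, of "norm z ^ 2"]] by simp
  qed
  finally show ?thesis .
qed

context
  fixes a :: real
  assumes a1: "1 < a" and a2: "a < 2"
begin

definition Psi :: "complex \<Rightarrow> complex" where
  "Psi s = (\<integral>x. indicator {0<..1} x *\<^sub>R ((exp (s * of_real x) - 1 - s * of_real x) / of_real (x powr (a + 1))) \<partial>lborel)"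

lemma integrable_powr01: "set_integrable lborel {0<..1} (\<lambda>x::real. x powr (1 - a))"
proof -
  have "(\<lambda>t. t powr (1 - a)) integrable_on {0<..1::real}"
    by (rule integrable_on_powr_from_0') (use a2 in auto)
  hence "(\<lambda>t. t powr (1 - a)) absolutely_integrable_on {0<..1::real}"
    by (subst absolutely_integrable_on_iff_nonneg) auto
  then show ?thesis
    unfolding set_integrable_def by (subst (asm) integrable_completion) auto
qed

lemma Psi_integrand_bound:
  fixes s :: complex
  assumes x: "x \<in> {0<..1}" and s: "norm s \<le> R"
  shows "norm ((exp (s * of_real x) - 1 - s * of_real x) / of_real (x powr (a + 1)))
          \<le> R^2 * exp R * x powr (1 - a)"
proof -
  have x0: "0 < x" "x \<le> 1" using x by auto
  have "norm (exp (s * of_real x) - 1 - s * of_real x) \<le> norm (s * of_real x) ^ 2 * exp (norm (s * of_real x))"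
    by (rule norm_exp_minus_1_minus)
  also have "\<dots> \<le> (R * x)^2 * exp R"
  proof (intro mult_mono power_mono)
    show "norm (s * of_real x) \<le> R * x" using s x0 by (simp add: norm_mult mult_right_mono)
    show "exp (norm (s * of_real x)) \<le> exp R"
      using s x0 by (simp add: norm_mult) (metis abs_of_pos mult_left_le mult.commute order_trans norm_ge_zero)
  qed auto
  finally have 1: "norm (exp (s * of_real x) - 1 - s * of_real x) \<le> (R * x)^2 * exp R" .
  have "norm ((exp (s * of_real x) - 1 - s * of_real x) / of_real (x powr (a + 1)))
      = norm (exp (s * of_real x) - 1 - s * of_real x) / x powr (a + 1)"
    using x0 by (simp add: norm_divide)
  also have "\<dots> \<le> (R * x)^2 * exp R / x powr (a + 1)"
    using 1 x0 by (intro divide_right_mono) auto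
  also have "\<dots> = R^2 * exp R * x powr (1 - a)"
  proof -
    have "x powr 2 / x powr (a+1) = x powr (2 - (a+1))" by (rule powr_diff[symmetric])
    then have e: "x^2 / x powr (a + 1) = x powr (1 - a)" using x0 by (simp add: powr_numeral)
    have "(R * x)^2 * exp R / x powr (a + 1) = R^2 * exp R * (x^2 / x powr (a + 1))"
      by (simp add: power_mult_distrib mult_ac)
    then show ?thesis by (simp only: e)
  qed
  finally show ?thesis .
qed

lemma Psi_bound:
  "\<exists>G. integrable lborel G \<and> (\<forall>x\<in>space lborel. \<forall>s::complex. norm s \<le> R \<longrightarrow>
      norm (indicator {0<..1} x *\<^sub>R ((exp (s * of_real x) - 1 - s * of_real x) / of_real (x powr (a + 1)))) \<le> G x)"
proof -
  define G where "G x = R^2 * exp R * (indicator {0<..1} x * x powr (1 - a))" for x :: real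
  have "integrable lborel G"
    unfolding G_def by (rule integrable_mult_right) (use integrable_powr01 in \<open>simp add: set_integrable_def\<close>)
  moreover have "norm (indicator {0<..1} x *\<^sub>R ((exp (s * of_real x) - 1 - s * of_real x) / of_real (x powr (a + 1))))
        \<le> G x" if "norm s \<le> R" for x :: real and s :: complex
  proof (cases "x \<in> {0<..1}")
    case True
    then show ?thesis using Psi_integrand_bound[OF True that] by (simp add: G_def)
  next
    case False
    then show ?thesis by (simp add: G_def)
  qed
  ultimately show ?thesis by (intro exI[of _ G] conjI ballI allI impI) auto
qed

lemma Psi_holo: "Psi holomorphic_on UNIV"
  unfolding Psi_def
proof (rule holo_param_integral)
  show "(\<lambda>x. indicator {0<..1} x *\<^sub>R ((exp (s * of_real x) - 1 - s * of_real x) / of_real (x powr (a + 1)))) \<in> borel_measurable lborel" for s :: complex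
    by measurable
  show "(\<lambda>s. indicator {0<..1} x *\<^sub>R ((exp (s * of_real x) - 1 - s * of_real x) / of_real (x powr (a + 1)))) holomorphic_on UNIV" for x :: real
    by (cases "x powr (a + 1) = 0") (auto intro!: holomorphic_intros)
qed (rule Psi_bound)

end

context
  fixes a :: real
  assumes a1: "1 < a" and a2: "a < 2"
begin

definition Phi :: "complex \<Rightarrow> complex" where "Phi s = exp (Psi a s)"

definition psir :: "real \<Rightarrow> real" where
  "psir u = (\<integral>x. indicator {0<..1} x * ((exp (u * x) - 1 - u * x) / x powr (a + 1)) \<partial>lborel)"

lemma Phi_holo: "Phi holomorphic_on UNIV"
  unfolding Phi_def using Psi_holo[OF a1 a2] by (intro holomorphic_intros) auto

lemma Psi_integrable:
  fixes s :: complex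
  shows "integrable lborel (\<lambda>x. indicator {0<..1} x *\<^sub>R ((exp (s * of_real x) - 1 - s * of_real x) / of_real (x powr (a + 1))))"
proof -
  obtain G where G: "integrable lborel G" "\<forall>x\<in>space lborel. \<forall>s'::complex. norm s' \<le> norm s \<longrightarrow>
      norm (indicator {0<..1} x *\<^sub>R ((exp (s' * of_real x) - 1 - s' * of_real x) / of_real (x powr (a + 1)))) \<le> G x"
    using Psi_bound[OF a1 a2, of "norm s"] by blast
  show ?thesis
    by (rule Bochner_Integration.integrable_bound[OF G(1)]) (use G(2) in \<open>auto intro!: AE_I2 order_trans[OF _ abs_ge_self]\<close>)
qed

lemma psir_integrable:
  "integrable lborel (\<lambda>x. indicator {0<..1} x * ((exp (u * x) - 1 - u * x) / x powr (a + 1)))"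
proof -
  have eq: "Re (indicator {0<..1} x *\<^sub>R ((exp (of_real u * of_real x) - 1 - of_real u * of_real x) / of_real (x powr (a + 1))))
     = indicator {0<..1} x * ((exp (u * x) - 1 - u * x) / x powr (a + 1))" for x :: real
  proof -
    have E: "exp (of_real u * of_real x) = (of_real (exp (u * x)) :: complex)" by (metis exp_of_real of_real_mult)
    show ?thesis by (cases "x \<in> {0<..1}") (simp_all add: E)
  qed
  show ?thesis using integrable_Re[OF Psi_integrable[of "of_real u"]] unfolding eq .
qed

lemma Psi_real: "Psi a (of_real u) = of_real (psir u)"
proof -
  have eq: "indicator {0<..1} x *\<^sub>R ((exp (of_real u * of_real x) - 1 - of_real u * of_real x) / of_real (x powr (a + 1)))
     = complex_of_real (indicator {0<..1} x * ((exp (u * x) - 1 - u * x) / x powr (a + 1)))" for x :: real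
  proof -
    have E: "exp (of_real u * of_real x) = (of_real (exp (u * x)) :: complex)" by (metis exp_of_real of_real_mult)
    show ?thesis by (cases "x \<in> {0<..1}") (simp_all add: E)
  qed
  show ?thesis unfolding Psi_def[OF a1 a2] psir_def eq by (rule integral_complex_of_real)
qed

lemma Psi_Re_le:
  fixes s :: complex
  shows "Re (Psi a s) \<le> psir (Re s)"
proof -
  have "Re (Psi a s) = (\<integral>x. Re (indicator {0<..1} x *\<^sub>R ((exp (s * of_real x) - 1 - s * of_real x) / of_real (x powr (a + 1)))) \<partial>lborel)"
    unfolding Psi_def[OF a1 a2] using Psi_integrable[of s] by (simp only: integral_Re)
  also have "\<dots> \<le> psir (Re s)"
    unfolding psir_def
  proof (rule integral_mono)
    show "integrable lborel (\<lambda>x. Re (indicator {0<..1} x *\<^sub>R ((exp (s * of_real x) - 1 - s * of_real x) / of_real (x powr (a + 1)))))"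
      using Psi_integrable[of s] by (rule integrable_Re)
    show "integrable lborel (\<lambda>x. indicator {0<..1} x * ((exp (Re s * x) - 1 - Re s * x) / x powr (a + 1)))"
      by (rule psir_integrable)
    fix x :: real
    show "Re (indicator {0<..1} x *\<^sub>R ((exp (s * of_real x) - 1 - s * of_real x) / of_real (x powr (a + 1))))
      \<le> indicator {0<..1} x * ((exp (Re s * x) - 1 - Re s * x) / x powr (a + 1))"
    proof (cases "x \<in> {0<..1}")
      case True
      then have xp: "x powr (a + 1) > 0" by auto
      have "Re (exp (s * of_real x)) \<le> exp (Re s * x)"
        by (simp add: Re_exp mult.commute)
      then show ?thesis using True xp by (simp add: divide_right_mono)
    qed simp
  qed
  finally show ?thesis .
qed

lemma norm_Phi_le:
  fixes s :: complex
  shows "norm (Phi s) \<le> exp (psir (Re s))"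
  unfolding Phi_def using Psi_Re_le[of s] by simp

lemma psir_bound: "\<exists>C. \<forall>u. \<bar>u\<bar> \<le> R \<longrightarrow> \<bar>psir u\<bar> \<le> C"
proof -
  obtain G where G: "integrable lborel G" "\<forall>x\<in>space lborel. \<forall>s::complex. norm s \<le> R \<longrightarrow>
      norm (indicator {0<..1} x *\<^sub>R ((exp (s * of_real x) - 1 - s * of_real x) / of_real (x powr (a + 1)))) \<le> G x"
    using Psi_bound[OF a1 a2, of R] by blast
  have "\<bar>psir u\<bar> \<le> integral\<^sup>L lborel G" if u: "\<bar>u\<bar> \<le> R" for u
  proof -
    have "\<bar>psir u\<bar> = norm (Psi a (of_real u))" by (simp add: Psi_real)
    also have "\<dots> \<le> integral\<^sup>L lborel G"
      unfolding Psi_def[OF a1 a2]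
      by (rule Bochner_Integration.integral_norm_bound_integral[OF Psi_integrable G(1)]) (use G(2) u in auto)
    finally show ?thesis .
  qed
  then show ?thesis by blast
qed

end

context
  fixes a :: real and \<mu> :: "real measure"
  assumes a1: "1 < a" and a2: "a < 2"
    and rd: "real_distribution \<mu>"
    and ch: "\<And>t. char \<mu> t = Phi a (\<i> * of_real t)"
begin

interpretation \<mu>: real_distribution \<mu> by (rule rd)

abbreviation N where "N \<equiv> std_normal_distribution"

interpretation N: real_distribution N by (rule real_dist_normal_dist)

definition Hd :: "real \<Rightarrow> complex \<Rightarrow> complex" where
  "Hd d s = (\<integral>u. Phi a (s + \<i> * of_real (d * u)) \<partial>N)"

definition Kd :: "real \<Rightarrow> complex \<Rightarrow> complex" where
  "Kd d s = (\<integral>x. exp (s * of_real x) * of_real (exp (- ((d * x)^2) / 2)) \<partial>\<mu>)"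

lemma Phi_cont: "continuous_on UNIV (Phi a)"
  using Phi_holo[OF a1 a2] holomorphic_on_imp_continuous_on by blast

lemma Phi_meas [measurable]: "Phi a \<in> borel_measurable borel"
  using Phi_cont by (rule borel_measurable_continuous_onI)

lemma Hd_holo: "Hd d holomorphic_on UNIV"
  unfolding Hd_def
proof (rule holo_param_integral)
  show "(\<lambda>u. Phi a (s + \<i> * of_real (d * u))) \<in> borel_measurable N" for s
    by measurable
  show "(\<lambda>s. Phi a (s + \<i> * of_real (d * u))) holomorphic_on UNIV" for u
  proof -
    have "(Phi a \<circ> (\<lambda>s. s + \<i> * of_real (d * u))) holomorphic_on UNIV"
    proof (rule holomorphic_on_compose)
      show "(\<lambda>s. s + \<i> * of_real (d * u)) holomorphic_on UNIV" by (intro holomorphic_intros)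
      show "Phi a holomorphic_on (\<lambda>s. s + \<i> * of_real (d * u)) ` UNIV"
        using Phi_holo[OF a1 a2] by (rule holomorphic_on_subset) simp
    qed
    then show ?thesis by (simp add: o_def)
  qed
  fix R
  obtain C where C: "\<And>u. \<bar>u\<bar> \<le> R \<Longrightarrow> \<bar>psir a u\<bar> \<le> C"
    using psir_bound[OF a1 a2, of R] by blast
  show "\<exists>G. integrable N G \<and> (\<forall>x\<in>space N. \<forall>s::complex. norm s \<le> R \<longrightarrow> norm (Phi a (s + \<i> * of_real (d * x))) \<le> G x)"
  proof (intro exI[of _ "\<lambda>_. exp C"] conjI ballI allI impI)
    show "integrable N (\<lambda>_. exp C)" by simp
    fix x :: real and s :: complex assume s: "norm s \<le> R"
    have "norm (Phi a (s + \<i> * of_real (d * x))) \<le> exp (psir a (Re (s + \<i> * of_real (d * x))))"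
      by (rule norm_Phi_le[OF a1 a2])
    also have "\<dots> = exp (psir a (Re s))" by simp
    also have "\<dots> \<le> exp C"
      using C[of "Re s"] s abs_Re_le_cmod[of s] by simp
    finally show "norm (Phi a (s + \<i> * of_real (d * x))) \<le> exp C" .
  qed
qed

lemma Kd_holo: assumes d: "d > 0" shows "Kd d holomorphic_on UNIV"
  unfolding Kd_def
proof (rule holo_param_integral)
  show "(\<lambda>x. exp (s * of_real x) * of_real (exp (- ((d * x)^2) / 2))) \<in> borel_measurable \<mu>" for s :: complex
    by (simp add: measurable_cong_sets[OF \<mu>.events_eq_borel refl])
  show "(\<lambda>s. exp (s * of_real x) * of_real (exp (- ((d * x)^2) / 2))) holomorphic_on UNIV" for x :: real
    by (auto intro!: holomorphic_intros)
  fix R :: real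
  show "\<exists>G. integrable \<mu> G \<and> (\<forall>x\<in>space \<mu>. \<forall>s::complex. norm s \<le> R \<longrightarrow> norm (exp (s * of_real x) * of_real (exp (- ((d * x)^2) / 2))) \<le> G x)"
  proof (intro exI[of _ "\<lambda>_. exp (R^2 / (2 * d^2))"] conjI ballI allI impI)
    show "integrable \<mu> (\<lambda>_. exp (R^2 / (2 * d^2)))" by simp
    fix x :: real and s :: complex assume s: "norm s \<le> R"
    have "norm (exp (s * of_real x) * of_real (exp (- ((d * x)^2) / 2))) = exp (Re s * x) * exp (- ((d * x)^2) / 2)"
      by (simp add: norm_mult)
    also have "\<dots> = exp (Re s * x - (d * x)^2 / 2)"
      by (subst exp_add[symmetric]) simp
    also have "\<dots> \<le> exp (R^2 / (2 * d^2))"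
    proof -
      have "Re s * x \<le> R * \<bar>x\<bar>"
      proof -
        have "Re s * x \<le> \<bar>Re s\<bar> * \<bar>x\<bar>" by (metis abs_ge_self abs_mult)
        also have "\<dots> \<le> R * \<bar>x\<bar>" using s abs_Re_le_cmod[of s] by (intro mult_right_mono) auto
        finally show ?thesis .
      qed
      moreover have "R * \<bar>x\<bar> - ((d * x)^2) / 2 \<le> R^2 / (2 * d^2)"
      proof -
        have "0 \<le> (d * \<bar>x\<bar> - R / d)^2 / 2" by simp
        also have "(d * \<bar>x\<bar> - R / d)^2 / 2 = (d * x)^2 / 2 - R * \<bar>x\<bar> + R^2 / (2 * d^2)"
          using d by (simp add: power2_eq_square field_simps)
        finally show ?thesis by simp
      qed
      ultimately show ?thesis by simp
    qed
    finally show "norm (exp (s * of_real x) * of_real (exp (- ((d * x)^2) / 2))) \<le> exp (R^2 / (2 * d^2))" .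
  qed
qed

lemma HK_imag: "Hd d (\<i> * of_real v) = Kd d (\<i> * of_real v)"
proof -
  interpret P: pair_sigma_finite \<mu> N
    unfolding pair_sigma_finite_def using \<mu>.sigma_finite_measure_axioms N.sigma_finite_measure_axioms by blast
  interpret PP: prob_space "\<mu> \<Otimes>\<^sub>M N"
    by (rule prob_space_pair) (rule \<mu>.prob_space_axioms, rule N.prob_space_axioms)
  define f where "f x u = iexp ((v + d * u) * x)" for x u :: real
  have sets: "sets (\<mu> \<Otimes>\<^sub>M N) = sets (borel \<Otimes>\<^sub>M borel)"
    by (rule sets_pair_measure_cong) (simp_all add: \<mu>.events_eq_borel N.events_eq_borel)
  have fmeas: "case_prod f \<in> borel_measurable (\<mu> \<Otimes>\<^sub>M N)"
    unfolding f_def measurable_cong_sets[OF sets refl] by measurable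
  have fint: "integrable (\<mu> \<Otimes>\<^sub>M N) (case_prod f)"
    by (rule PP.integrable_const_bound[where B=1]) (use fmeas in \<open>auto simp: f_def\<close>)
  have 1: "Hd d (\<i> * of_real v) = (\<integral>u. (\<integral>x. f x u \<partial>\<mu>) \<partial>N)"
    unfolding Hd_def
  proof (rule Bochner_Integration.integral_cong[OF refl])
    fix u :: real
    have "Phi a (\<i> * of_real v + \<i> * of_real (d * u)) = Phi a (\<i> * of_real (v + d * u))"
      by (simp add: distrib_left)
    also have "\<dots> = char \<mu> (v + d * u)" by (rule ch[symmetric])
    finally show "Phi a (\<i> * of_real v + \<i> * of_real (d * u)) = (\<integral>x. f x u \<partial>\<mu>)"
      by (simp add: char_def f_def)
  qed
  also have "\<dots> = (\<integral>x. (\<integral>u. f x u \<partial>N) \<partial>\<mu>)"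
    by (rule P.Fubini_integral[OF fint])
  also have "\<dots> = (\<integral>x. exp (\<i> * of_real v * of_real x) * of_real (exp (- ((d * x)^2) / 2)) \<partial>\<mu>)"
  proof (rule Bochner_Integration.integral_cong[OF refl])
    fix x :: real
    have "f x u = iexp (v * x) * iexp ((d * x) * u)" for u
      by (simp add: f_def exp_add[symmetric] algebra_simps)
    then have "(\<integral>u. f x u \<partial>N) = iexp (v * x) * (\<integral>u. iexp ((d * x) * u) \<partial>N)"
      by simp
    also have "(\<integral>u. iexp ((d * x) * u) \<partial>N) = char N (d * x)" by (simp add: char_def)
    also have "\<dots> = of_real (exp (- ((d * x)^2) / 2))" by (simp add: char_std_normal_distribution)
    finally show "(\<integral>u. f x u \<partial>N) = exp (\<i> * of_real v * of_real x) * of_real (exp (- ((d * x)^2) / 2))"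
      by (simp add: mult_ac)
  qed
  also have "\<dots> = Kd d (\<i> * of_real v)" unfolding Kd_def ..
  finally show ?thesis .
qed

lemma HK_eq: assumes d: "d > 0" shows "Hd d w = Kd d w"
proof -
  have "(\<lambda>s. Hd d s - Kd d s) w = 0"
  proof (rule analytic_continuation[where f="\<lambda>s. Hd d s - Kd d s" and S=UNIV and U="range (\<lambda>v. \<i> * of_real v)" and \<xi>=0])
    show "(\<lambda>s. Hd d s - Kd d s) holomorphic_on UNIV"
      using Hd_holo Kd_holo[OF d] by (rule holomorphic_on_diff)
    show "0 islimpt range (\<lambda>v. \<i> * complex_of_real v)"
      unfolding islimpt_approachable
      apply (intro allI impI)
      subgoal for e
        apply (rule bexI[of _ "\<i> * of_real (e / 2)"])
         apply (simp add: norm_mult)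
        apply (rule rangeI)
        done
      done
    show "Hd d z - Kd d z = 0" if "z \<in> range (\<lambda>v. \<i> * complex_of_real v)" for z
      using that HK_imag by auto
  qed auto
  then show ?thesis by simp
qed

lemma gauss_ineq: fixes d u x :: real assumes d: "d > 0" shows "u * x - (d * x)^2 / 2 \<le> u^2 / (2 * d^2)"
proof -
  have "0 \<le> (d * x - u / d)^2 / 2" by simp
  also have "(d * x - u / d)^2 / 2 = (d * x)^2 / 2 - u * x + u^2 / (2 * d^2)"
    using d by (simp add: power2_eq_square field_simps)
  finally show ?thesis by simp
qed

lemma exp_moment:
  shows "integrable \<mu> (\<lambda>x. exp (u * x))" and "(\<integral>x. exp (u * x) \<partial>\<mu>) = exp (psir a u)"
proof -
  define dn where "dn n = 1 / real (Suc n)" for n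
  have dn_pos: "dn n > 0" for n by (simp add: dn_def)
  have dn_lim: "dn \<longlonglongrightarrow> 0"
    unfolding dn_def using LIMSEQ_inverse_real_of_nat by (simp add: inverse_eq_divide)
  define k where "k n x = exp (u * x) * exp (- ((dn n * x)^2) / 2)" for n x
  have kmeas: "k n \<in> borel_measurable \<mu>" for n
    unfolding k_def by (simp add: measurable_cong_sets[OF \<mu>.events_eq_borel refl])
  have kint: "integrable \<mu> (k n)" for n
  proof (rule \<mu>.integrable_const_bound[where B="exp (u^2 / (2 * (dn n)^2))"])
    show "AE x in \<mu>. norm (k n x) \<le> exp (u^2 / (2 * (dn n)^2))"
    proof (rule AE_I2)
      fix x
      have "norm (k n x) = exp (u * x - (dn n * x)^2 / 2)"
        by (simp add: k_def exp_add[symmetric])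
      also have "\<dots> \<le> exp (u^2 / (2 * (dn n)^2))" using gauss_ineq[OF dn_pos[of n], of u x] by simp
      finally show "norm (k n x) \<le> exp (u^2 / (2 * (dn n)^2))" .
    qed
  qed (rule kmeas)
  have KK: "Kd (dn n) (of_real u) = of_real (\<integral>x. k n x \<partial>\<mu>)" for n
  proof -
    have "exp (of_real u * of_real x) * of_real (exp (- ((dn n * x)^2) / 2)) = complex_of_real (k n x)" for x
      by (simp add: k_def exp_of_real flip: of_real_mult)
    then show ?thesis unfolding Kd_def by simp
  qed
  have HL0: "(\<lambda>n. Hd (dn n) (of_real u)) \<longlonglongrightarrow> (\<integral>y. Phi a (of_real u) \<partial>N)"
    unfolding Hd_def
  proof (rule integral_dominated_convergence[where w="\<lambda>_. exp (psir a u)"])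
    show "(\<lambda>y. Phi a (of_real u + \<i> * of_real (dn n * y))) \<in> borel_measurable N" for n
      by measurable
    show "(\<lambda>y. Phi a (of_real u)) \<in> borel_measurable N" by simp
    show "integrable N (\<lambda>_. exp (psir a u))" by simp
    show "AE y in N. (\<lambda>n. Phi a (of_real u + \<i> * of_real (dn n * y))) \<longlonglongrightarrow> Phi a (of_real u)"
    proof (rule AE_I2)
      fix y
      have c: "isCont (Phi a) (of_real u)"
        using Phi_cont continuous_on_eq_continuous_at open_UNIV by blast
      have "(\<lambda>n. of_real u + \<i> * of_real (dn n * y)) \<longlonglongrightarrow> (of_real u + \<i> * of_real (0 * y) :: complex)"
        by (intro tendsto_intros dn_lim)
      then have "(\<lambda>n. of_real u + \<i> * of_real (dn n * y)) \<longlonglongrightarrow> (of_real u :: complex)" by simp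
      then show "(\<lambda>n. Phi a (of_real u + \<i> * of_real (dn n * y))) \<longlonglongrightarrow> Phi a (of_real u)"
        by (rule isCont_tendsto_compose[OF c])
    qed
    show "AE y in N. norm (Phi a (of_real u + \<i> * of_real (dn n * y))) \<le> exp (psir a u)" for n
    proof (rule AE_I2)
      fix y
      show "norm (Phi a (of_real u + \<i> * of_real (dn n * y))) \<le> exp (psir a u)"
        using norm_Phi_le[OF a1 a2, of "of_real u + \<i> * of_real (dn n * y)"] by simp
    qed
  qed
  have HL: "(\<lambda>n. Hd (dn n) (of_real u)) \<longlonglongrightarrow> Phi a (of_real u)"
    using HL0 N.prob_space by (simp add: N.space_eq_univ)
  have PhiR: "Phi a (of_real u) = of_real (exp (psir a u))"
    unfolding Phi_def[OF a1 a2] by (simp add: Psi_real[OF a1 a2] exp_of_real)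
  have KL: "(\<lambda>n. \<integral>x. k n x \<partial>\<mu>) \<longlonglongrightarrow> exp (psir a u)"
  proof -
    have "(\<lambda>n. complex_of_real (\<integral>x. k n x \<partial>\<mu>)) \<longlonglongrightarrow> complex_of_real (exp (psir a u))"
      using HL unfolding HK_eq[OF dn_pos] KK PhiR .
    then show ?thesis by (simp add: tendsto_of_real_iff)
  qed
  have NL: "(\<lambda>n. \<integral>\<^sup>+x. ennreal (k n x) \<partial>\<mu>) \<longlonglongrightarrow> (\<integral>\<^sup>+x. ennreal (exp (u * x)) \<partial>\<mu>)"
  proof (rule nn_integral_LIMSEQ)
    show "incseq (\<lambda>n x. ennreal (k n x))"
    proof (rule incseq_SucI, rule le_funI)
      fix n x
      have "dn (Suc n) \<le> dn n" by (simp add: dn_def frac_le)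
      then have "(dn (Suc n) * x)^2 \<le> (dn n * x)^2"
        using dn_pos[of "Suc n"] by (simp add: power_mult_distrib mult_right_mono power_mono)
      then show "ennreal (k n x) \<le> ennreal (k (Suc n) x)"
        by (simp add: k_def ennreal_leI)
    qed
    show "(\<lambda>x. ennreal (k n x)) \<in> borel_measurable \<mu>" for n using kmeas[of n] by measurable
    show "(\<lambda>n. ennreal (k n x)) \<longlonglongrightarrow> ennreal (exp (u * x))" for x :: real
    proof -
      have "(\<lambda>n. k n x) \<longlonglongrightarrow> exp (u * x) * exp (- ((0 * x)^2) / 2)"
        unfolding k_def by (intro tendsto_intros dn_lim) simp_all
      then show ?thesis by (intro tendsto_ennrealI) simp
    qed
  qed
  have "(\<integral>\<^sup>+x. ennreal (k n x) \<partial>\<mu>) = ennreal (\<integral>x. k n x \<partial>\<mu>)" for n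
    by (rule nn_integral_eq_integral[OF kint]) (simp add: k_def)
  with NL have "(\<lambda>n. ennreal (\<integral>x. k n x \<partial>\<mu>)) \<longlonglongrightarrow> (\<integral>\<^sup>+x. ennreal (exp (u * x)) \<partial>\<mu>)" by simp
  moreover have "(\<lambda>n. ennreal (\<integral>x. k n x \<partial>\<mu>)) \<longlonglongrightarrow> ennreal (exp (psir a u))"
    using KL by (rule tendsto_ennrealI)
  ultimately have eq: "(\<integral>\<^sup>+x. ennreal (exp (u * x)) \<partial>\<mu>) = ennreal (exp (psir a u))"
    by (rule LIMSEQ_unique)
  have "integrable \<mu> (\<lambda>x. exp (u * x)) \<and> (\<integral>x. exp (u * x) \<partial>\<mu>) = exp (psir a u)"
    by (rule nn_integral_eq_integrable[THEN iffD1, OF _ _ _ eq])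
       (simp_all add: measurable_cong_sets[OF \<mu>.events_eq_borel refl])
  then show "integrable \<mu> (\<lambda>x. exp (u * x))" "(\<integral>x. exp (u * x) \<partial>\<mu>) = exp (psir a u)" by auto
qed

end

lemma ineq_e1: fixes y :: real assumes "y \<ge> 0" shows "exp (-y) - 1 + y \<le> y^2 / 2"
proof -
  define f where "f t = 1 - t + t^2 / 2 - exp (-t)" for t :: real
  have "f 0 \<le> f y"
  proof (rule DERIV_nonneg_imp_increasing_open[OF assms])
    fix x :: real assume x: "0 < x" "x < y"
    have "(f has_real_derivative (-1 + x + exp (-x))) (at x)"
      unfolding f_def by (auto intro!: derivative_eq_intros simp: power2_eq_square)
    moreover have "0 \<le> -1 + x + exp (-x)" using exp_ge_add_one_self[of "-x"] by simp
    ultimately show "\<exists>y. (f has_real_derivative y) (at x) \<and> 0 \<le> y" by blast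
  qed (auto simp: f_def intro!: continuous_intros)
  then show ?thesis by (simp add: f_def)
qed

lemma ineq_e2: fixes y :: real assumes "y \<ge> 0" shows "exp (-y) - 1 + y \<le> y"
  using assms by simp

lemma ineq_e3: fixes y :: real assumes y: "y \<ge> 1" shows "y / exp 1 \<le> exp (-y) - 1 + y"
proof -
  define f where "f t = exp (-t) - 1 + t - t / exp 1" for t :: real
  have "f 1 \<le> f y"
  proof (rule DERIV_nonneg_imp_increasing_open[OF y])
    fix x :: real assume x: "1 < x" "x < y"
    have "(f has_real_derivative (- exp (-x) + 1 - 1 / exp 1)) (at x)"
      unfolding f_def by (auto intro!: derivative_eq_intros)
    moreover have "0 \<le> - exp (-x) + 1 - 1 / exp 1"
    proof -
      have "exp (-x) \<le> exp (-1)" using x by simp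
      moreover have "exp (-1::real) = 1 / exp 1" by (simp add: exp_minus inverse_eq_divide)
      moreover have "1 / exp 1 \<le> (1/2::real)"
        using exp_ge_add_one_self[of "1::real"] by (simp add: divide_le_eq)
      ultimately show ?thesis by linarith
    qed
    ultimately show "\<exists>y. (f has_real_derivative y) (at x) \<and> 0 \<le> y" by blast
  qed (auto simp: f_def intro!: continuous_intros)
  moreover have "f 1 = 0" by (simp add: f_def exp_minus inverse_eq_divide)
  ultimately show ?thesis by (simp add: f_def)
qed

lemma ineq_k: fixes t :: real assumes "t \<ge> 0" shows "2 - t \<le> (2 + t) * exp (-t)"
proof -
  define k where "k s = (2 + s) * exp (-s) - (2 - s)" for s :: real
  have "k 0 \<le> k t"
  proof (rule DERIV_nonneg_imp_increasing_open[OF assms])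
    fix x :: real assume x: "0 < x" "x < t"
    have "(k has_real_derivative (1 - (1 + x) * exp (-x))) (at x)"
      unfolding k_def by (auto intro!: derivative_eq_intros simp: algebra_simps)
    moreover have "0 \<le> 1 - (1 + x) * exp (-x)"
    proof -
      have "(1 + x) \<le> exp x" by (rule exp_ge_add_one_self)
      then have "(1 + x) * exp (-x) \<le> exp x * exp (-x)" by (intro mult_right_mono) auto
      also have "\<dots> = 1" by (simp add: exp_minus)
      finally show ?thesis by simp
    qed
    ultimately show "\<exists>y. (k has_real_derivative y) (at x) \<and> 0 \<le> y" by blast
  qed (auto simp: k_def intro!: continuous_intros)
  then show ?thesis by (simp add: k_def)
qed

lemma ineq_e4: fixes y :: real assumes y: "0 \<le> y" "y \<le> 1" shows "y^2 / exp 1 \<le> exp (-y) - 1 + y"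
proof (cases "y = 0")
  case True then show ?thesis by simp
next
  case False
  with y have y0: "y > 0" by simp
  define g where "g t = (exp (-t) - 1 + t) / t^2" for t :: real
  have "g 1 \<le> g y"
  proof (rule DERIV_nonpos_imp_decreasing_open[OF y(2)])
    fix x :: real assume x: "y < x" "x < 1"
    with y0 have x0: "x > 0" by simp
    have "(g has_real_derivative (((1 - exp (-x)) * x^2 - (exp (-x) - 1 + x) * (2 * x)) / (x^2)^2)) (at x)"
      unfolding g_def using x0 by (auto intro!: derivative_eq_intros simp: power2_eq_square)
    moreover have "((1 - exp (-x)) * x^2 - (exp (-x) - 1 + x) * (2 * x)) / (x^2)^2 \<le> 0"
    proof -
      have "(1 - exp (-x)) * x^2 - (exp (-x) - 1 + x) * (2 * x) = x * ((2 - x) - (2 + x) * exp (-x))"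
        by (simp add: power2_eq_square algebra_simps)
      also have "\<dots> \<le> 0" using ineq_k[of x] x0 by (simp add: mult_nonneg_nonpos)
      finally show ?thesis by (rule divide_nonpos_pos) (use x0 in simp)
    qed
    ultimately show "\<exists>z. (g has_real_derivative z) (at x) \<and> z \<le> 0" by blast
  next
    show "continuous_on {y..1} g" unfolding g_def using y0 by (auto intro!: continuous_intros)
  qed
  moreover have "g 1 = 1 / exp 1" by (simp add: g_def exp_minus inverse_eq_divide)
  ultimately have "1 / exp 1 \<le> (exp (-y) - 1 + y) / y^2" by (simp add: g_def)
  then show ?thesis using y0 by (simp add: field_simps)
qed

lemma powr_div_aux1: fixes x a :: real assumes "x > 0" shows "x^2 / x powr (a + 1) = x powr (1 - a)"
proof -
  have "x powr 2 / x powr (a+1) = x powr (2 - (a+1))" by (rule powr_diff[symmetric])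
  then show ?thesis using assms by (simp add: powr_numeral)
qed

lemma powr_div_aux2: fixes x a :: real assumes "x > 0" shows "x / x powr (a + 1) = x powr (- a)"
proof -
  have "x powr 1 / x powr (a+1) = x powr (1 - (a+1))" by (rule powr_diff[symmetric])
  then show ?thesis using assms by simp
qed

lemma spike01: fixes f :: "real \<Rightarrow> real" shows "(f has_integral I) {0..1::real} \<Longrightarrow> (f has_integral I) {0<..1}"
proof -
  assume "(f has_integral I) {0..1::real}"
  moreover have "(f has_integral I) {0..1::real} \<longleftrightarrow> (f has_integral I) {0<..1}"
    by (rule has_integral_spike_set_eq) (auto intro: negligible_subset[OF negligible_sing[of 0]])
  ultimately show ?thesis by simp
qed

context
  fixes a :: real
  assumes a1: "1 < a" and a2: "a < 2"
begin

definition gf :: "real \<Rightarrow> real \<Rightarrow> real" where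
  "gf u x = (exp (u * x) - 1 - u * x) / x powr (a + 1)"

lemma psir_HK: "gf u integrable_on {0<..1}" "psir a u = integral {0<..1} (gf u)"
proof -
  have si: "set_integrable lborel {0<..1} (gf u)"
    unfolding set_integrable_def gf_def using psir_integrable[OF a1 a2, of u] by simp
  show "gf u integrable_on {0<..1}" by (rule set_borel_integral_eq_integral(1)[OF si])
  have "psir a u = set_lebesgue_integral lborel {0<..1} (gf u)"
    unfolding psir_def[OF a1 a2] set_lebesgue_integral_def gf_def by simp
  also have "\<dots> = integral {0<..1} (gf u)" by (rule set_borel_integral_eq_integral(2)[OF si])
  finally show "psir a u = integral {0<..1} (gf u)" .
qed

lemma psir_le1: assumes m: "m \<ge> 0" shows "psir a (-m) \<le> m^2 / (2 * (2 - a))"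
proof -
  have I: "((\<lambda>x. m^2 / 2 * x powr (1 - a)) has_integral (m^2 / 2 * (1 / (2 - a)))) {0<..1}"
  proof (rule spike01)
    have "((\<lambda>x. x powr (1 - a)) has_integral (1 powr ((1 - a) + 1) / ((1 - a) + 1))) {0..1}"
      by (rule has_integral_powr_from_0) (use a2 in auto)
    then have "((\<lambda>x. x powr (1 - a)) has_integral (1 / (2 - a))) {0..1}" by simp
    then show "((\<lambda>x. m^2 / 2 * x powr (1 - a)) has_integral (m^2 / 2 * (1 / (2 - a)))) {0..1}"
      by (rule has_integral_mult_right)
  qed
  have "psir a (-m) = integral {0<..1} (gf (-m))" by (rule psir_HK(2))
  also have "\<dots> \<le> integral {0<..1} (\<lambda>x. m^2 / 2 * x powr (1 - a))"
  proof (rule integral_le)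
    show "gf (-m) integrable_on {0<..1}" by (rule psir_HK(1))
    show "(\<lambda>x. m^2 / 2 * x powr (1 - a)) integrable_on {0<..1}" using I by blast
    fix x :: real assume x: "x \<in> {0<..1}"
    then have x0: "x > 0" by simp
    have "gf (-m) x = (exp (-(m * x)) - 1 + m * x) / x powr (a + 1)" by (simp add: gf_def)
    also have "\<dots> \<le> ((m * x)^2 / 2) / x powr (a + 1)"
      using ineq_e1[of "m * x"] m x0 by (intro divide_right_mono) auto
    also have "\<dots> = m^2 / 2 * (x^2 / x powr (a + 1))" by (simp add: power_mult_distrib)
    also have "\<dots> = m^2 / 2 * x powr (1 - a)" using x0 by (simp add: powr_div_aux1)
    finally show "gf (-m) x \<le> m^2 / 2 * x powr (1 - a)" .
  qed
  also have "\<dots> = m^2 / 2 * (1 / (2 - a))" by (rule integral_unique[OF I])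
  also have "\<dots> = m^2 / (2 * (2 - a))" by simp
  finally show ?thesis .
qed

definition hf :: "real \<Rightarrow> real \<Rightarrow> real" where
  "hf m x = (if x \<le> 1 / m then m^2 * x powr (1 - a) else m * x powr (- a))"

lemma hf_integral: assumes m: "m \<ge> 1"
  shows "(hf m has_integral ((1 / (2 - a) + 1 / (a - 1)) * m powr a - m / (a - 1))) {0<..1}"
proof (rule spike01)
  define c where "c = 1 / m"
  have m0: "m > 0" using m by simp
  have c0: "0 < c" "c \<le> 1" using m by (auto simp: c_def)
  have I1: "(hf m has_integral (m^2 * (c powr (2 - a) / (2 - a)))) {0..c}"
  proof -
    have "((\<lambda>x. x powr (1 - a)) has_integral (c powr ((1 - a) + 1) / ((1 - a) + 1))) {0..c}"
      by (rule has_integral_powr_from_0) (use a2 c0 in auto)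
    then have "((\<lambda>x. m^2 * x powr (1 - a)) has_integral (m^2 * (c powr (2 - a) / (2 - a)))) {0..c}"
      by (intro has_integral_mult_right) simp
    then show ?thesis
      by (rule has_integral_eq[rotated]) (simp add: hf_def c_def)
  qed
  have I2: "(hf m has_integral (m * (c powr (1 - a) - 1) / (a - 1))) {c..1}"
  proof -
    define F where "F x = m * x powr (1 - a) / (1 - a)" for x
    have "((\<lambda>x. m * x powr (- a)) has_integral (F 1 - F c)) {c..1}"
    proof (rule fundamental_theorem_of_calculus)
      show "c \<le> 1" by (rule c0(2))
      fix x assume x: "x \<in> {c..1}"
      then have x0: "x > 0" using c0 by simp
      have "(F has_real_derivative (m * ((1 - a) * x powr ((1 - a) - 1)) / (1 - a))) (at x)"
        unfolding F_def by (intro DERIV_cdivide DERIV_cmult has_real_derivative_powr x0)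
      moreover have "m * ((1 - a) * x powr ((1 - a) - 1)) / (1 - a) = m * x powr (- a)"
        using a1 by simp
      ultimately have "(F has_real_derivative (m * x powr (- a))) (at x within {c..1})"
        using has_field_derivative_at_within by fastforce
      then show "(F has_vector_derivative (m * x powr (- a))) (at x within {c..1})"
        by (simp add: has_real_derivative_iff_has_vector_derivative)
    qed
    moreover have "F 1 - F c = m * (c powr (1 - a) - 1) / (a - 1)"
    proof -
      have "F 1 - F c = (m - m * c powr (1 - a)) / (1 - a)" by (simp add: F_def diff_divide_distrib)
      also have "\<dots> = (- (m * c powr (1 - a) - m)) / (- (a - 1))" by simp
      also have "\<dots> = (m * c powr (1 - a) - m) / (a - 1)" by (rule minus_divide_divide)
      also have "\<dots> = m * (c powr (1 - a) - 1) / (a - 1)" by (simp add: right_diff_distrib)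
      finally show ?thesis .
    qed
    ultimately have "((\<lambda>x. m * x powr (- a)) has_integral (m * (c powr (1 - a) - 1) / (a - 1))) {c..1}"
      by simp
    then show ?thesis
      by (rule has_integral_spike[OF negligible_sing[of c], rotated]) (auto simp: hf_def c_def)
  qed
  have "(hf m has_integral (m^2 * (c powr (2 - a) / (2 - a)) + m * (c powr (1 - a) - 1) / (a - 1))) {0..1}"
    by (rule has_integral_combine[OF _ _ I1 I2]) (use c0 in auto)
  moreover have "m^2 * (c powr (2 - a) / (2 - a)) + m * (c powr (1 - a) - 1) / (a - 1)
      = (1 / (2 - a) + 1 / (a - 1)) * m powr a - m / (a - 1)"
  proof -
    have e1: "m^2 * c powr (2 - a) = m powr a"
    proof -
      have "c powr (2 - a) = 1 / m powr (2 - a)" using m0 by (simp add: c_def powr_divide)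
      moreover have "m^2 = m powr 2" using m0 by (simp add: powr_numeral)
      moreover have "m powr 2 / m powr (2 - a) = m powr a" by (simp add: powr_diff[symmetric])
      ultimately show ?thesis by simp
    qed
    have e2: "m * c powr (1 - a) = m powr a"
    proof -
      have "c powr (1 - a) = 1 / m powr (1 - a)" using m0 by (simp add: c_def powr_divide)
      moreover have "m / m powr (1 - a) = m powr a"
      proof -
        have "m powr 1 / m powr (1 - a) = m powr (1 - (1 - a))" by (rule powr_diff[symmetric])
        then show ?thesis using m0 by simp
      qed
      ultimately show ?thesis by simp
    qed
    have "m^2 * (c powr (2 - a) / (2 - a)) + m * (c powr (1 - a) - 1) / (a - 1)
        = (m^2 * c powr (2 - a)) / (2 - a) + (m * c powr (1 - a) - m) / (a - 1)"
      by (simp add: algebra_simps)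
    also have "\<dots> = m powr a / (2 - a) + (m powr a - m) / (a - 1)" by (simp only: e1 e2)
    also have "\<dots> = (1 / (2 - a) + 1 / (a - 1)) * m powr a - m / (a - 1)"
      by (simp add: diff_divide_distrib distrib_right)
    finally show ?thesis .
  qed
  ultimately show "(hf m has_integral ((1 / (2 - a) + 1 / (a - 1)) * m powr a - m / (a - 1))) {0..1}"
    by simp
qed

lemma gf_hf_bounds: assumes m: "m \<ge> 1" and x: "x \<in> {0<..1}"
  shows "gf (-m) x \<le> hf m x" "hf m x / exp 1 \<le> gf (-m) x"
proof -
  have x0: "x > 0" using x by simp
  have m0: "m > 0" using m by simp
  have p: "x powr (a + 1) > 0" using x0 by simp
  have g: "gf (-m) x = (exp (-(m * x)) - 1 + m * x) / x powr (a + 1)" by (simp add: gf_def)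
  show "gf (-m) x \<le> hf m x"
  proof (cases "x \<le> 1 / m")
    case True
    have h1: "exp (-(m * x)) - 1 + m * x \<le> (m * x)^2 / 2" by (rule ineq_e1) (use m0 x0 in simp)
    have h2: "0 \<le> (m * x)^2" by (rule zero_le_power2)
    from h1 h2 have n: "exp (-(m * x)) - 1 + m * x \<le> (m * x)^2" by linarith
    have "gf (-m) x \<le> (m * x)^2 / x powr (a + 1)"
      unfolding g using n p by (intro divide_right_mono) auto
    also have "\<dots> = m^2 * (x^2 / x powr (a + 1))" by (simp add: power_mult_distrib)
    also have "\<dots> = hf m x" using True x0 by (simp add: hf_def powr_div_aux1)
    finally show ?thesis .
  next
    case False
    have "gf (-m) x \<le> (m * x) / x powr (a + 1)"
      unfolding g using ineq_e2[of "m * x"] m0 x0 p by (intro divide_right_mono) auto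
    also have "\<dots> = m * (x / x powr (a + 1))" by simp
    also have "\<dots> = hf m x" using False x0 by (simp add: hf_def powr_div_aux2)
    finally show ?thesis .
  qed
  show "hf m x / exp 1 \<le> gf (-m) x"
  proof (cases "x \<le> 1 / m")
    case True
    then have y1: "m * x \<le> 1" using m0 by (simp add: field_simps)
    have "hf m x / exp 1 = ((m * x)^2 / exp 1) / x powr (a + 1)"
      using True x0 by (simp add: hf_def powr_div_aux1[symmetric] power_mult_distrib)
    also have "\<dots> \<le> gf (-m) x"
      unfolding g using ineq_e4[of "m * x"] m0 x0 p y1 by (intro divide_right_mono) auto
    finally show ?thesis .
  next
    case False
    then have y1: "m * x \<ge> 1" using m0 by (simp add: field_simps)
    have "hf m x / exp 1 = ((m * x) / exp 1) / x powr (a + 1)"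
      using False x0 by (simp add: hf_def powr_div_aux2[symmetric])
    also have "\<dots> \<le> gf (-m) x"
      unfolding g using ineq_e3[of "m * x"] y1 p by (intro divide_right_mono) auto
    finally show ?thesis .
  qed
qed

lemma psir_le2: assumes m: "m \<ge> 1"
  shows "psir a (-m) \<le> (1 / (2 - a) + 1 / (a - 1)) * m powr a - m / (a - 1)"
proof -
  have "psir a (-m) = integral {0<..1} (gf (-m))" by (rule psir_HK(2))
  also have "\<dots> \<le> integral {0<..1} (hf m)"
    by (rule integral_le[OF psir_HK(1)]) (use hf_integral[OF m] gf_hf_bounds(1)[OF m] in auto)
  also have "\<dots> = (1 / (2 - a) + 1 / (a - 1)) * m powr a - m / (a - 1)"
    by (rule integral_unique[OF hf_integral[OF m]])
  finally show ?thesis .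
qed

lemma psir_ge: assumes m: "m \<ge> 1"
  shows "((1 / (2 - a) + 1 / (a - 1)) * m powr a - m / (a - 1)) / exp 1 \<le> psir a (-m)"
proof -
  have I: "((\<lambda>x. hf m x / exp 1) has_integral (((1 / (2 - a) + 1 / (a - 1)) * m powr a - m / (a - 1)) / exp 1)) {0<..1}"
    using has_integral_mult_right[OF hf_integral[OF m], of "1 / exp 1"] by (simp add: mult.commute)
  have "((1 / (2 - a) + 1 / (a - 1)) * m powr a - m / (a - 1)) / exp 1 = integral {0<..1} (\<lambda>x. hf m x / exp 1)"
    by (rule integral_unique[OF I, symmetric])
  also have "\<dots> \<le> integral {0<..1} (gf (-m))"
    by (rule integral_le[OF _ psir_HK(1)]) (use I gf_hf_bounds(2)[OF m] in auto)
  also have "\<dots> = psir a (-m)" by (rule psir_HK(2)[symmetric])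
  finally show ?thesis .
qed

end

lemma upper_real:
  fixes a y :: real and \<psi> :: "real \<Rightarrow> real"
  assumes a1: "1 < a" and a2: "a < 2" and y: "y \<ge> 2 / (2 - a)"
    and U1: "\<And>m. m \<ge> 0 \<Longrightarrow> \<psi> (-m) \<le> m^2 / (2 * (2 - a))"
    and U2: "\<And>m. m \<ge> 1 \<Longrightarrow> \<psi> (-m) \<le> (1 / (2 - a) + 1 / (a - 1)) * m powr a - m / (a - 1)"
  shows "\<exists>l\<ge>0. - l * y + \<psi> (-l) \<le> - (((1/2) * (y + 1 / (a - 1))) powr (a / (a - 1)) / ((1 / (2 - a) + 1 / (a - 1)) powr (1 / (a - 1))))"
proof -
  define p where "p = 1 / (a - 1)"
  define q where "q = 1 / (2 - a)"
  define A where "A = q + p"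
  define z where "z = y + p"
  define r where "r = z / (2 * A)"
  define l where "l = r powr p"
  have p1: "p > 1" using a1 a2 by (simp add: p_def)
  have q1: "q > 1" using a1 a2 by (simp add: q_def)
  have yq: "y \<ge> 2 * q" using y by (simp add: q_def)
  have ap: "a / (a - 1) = p + 1" using a1 by (simp add: p_def field_simps)
  have A0: "A > 0" using p1 q1 by (simp add: A_def)
  have z0: "z > 0" using yq q1 p1 by (simp add: z_def)
  have r0: "r > 0" using z0 A0 by (simp add: r_def)
  have l0: "l > 0" using r0 by (simp add: l_def)
  have T: "((1/2) * z) powr (p + 1) / A powr p = (z / 2) * l"
  proof -
    have e1: "((1/2) * z) powr (p + 1) = (z / 2) * (z / 2) powr p"
      using z0 by (simp add: powr_add)
    have e2: "(z / 2) powr p / A powr p = l"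
      using z0 A0 by (simp add: l_def r_def powr_divide[symmetric] field_simps)
    show ?thesis unfolding e1 by (simp only: times_divide_eq_right[symmetric] e2)
  qed
  have goal_eq: "((1/2) * (y + 1 / (a - 1))) powr (a / (a - 1)) / ((1 / (2 - a) + 1 / (a - 1)) powr (1 / (a - 1)))
      = (z / 2) * l"
    using T by (simp add: ap z_def A_def p_def q_def)
  show ?thesis
  proof (cases "r \<ge> 1")
    case True
    have l1: "l \<ge> 1" unfolding l_def using True p1 by (intro ge_one_powr_ge_zero) auto
    have la: "l powr a = r * l"
    proof -
      have "l powr a = l powr ((a - 1) + 1)" by simp
      also have "\<dots> = l powr (a - 1) * l powr 1" by (rule powr_add)
      also have "l powr 1 = l" using l0 by simp
      also have "l powr (a - 1) = r powr (p * (a - 1))" by (simp add: l_def powr_powr)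
      also have "p * (a - 1) = 1" using a1 by (simp add: p_def)
      finally show ?thesis using r0 l0 by simp
    qed
    have "- l * y + \<psi> (-l) \<le> - l * y + (A * l powr a - l * p)"
      using U2[OF l1] by (simp add: A_def p_def q_def)
    also have "\<dots> = - (z / 2) * l"
      using la A0 by (simp add: r_def z_def field_simps)
    finally show ?thesis using l0 goal_eq by (intro exI[of _ l]) auto
  next
    case False
    define l0' where "l0' = y / q"
    have l0'0: "l0' \<ge> 0" using yq q1 by (simp add: l0'_def)
    have "- l0' * y + \<psi> (- l0') \<le> - l0' * y + l0'^2 / (2 * (2 - a))"
      using U1[OF l0'0] by simp
    also have "\<dots> = - (y^2 / (2 * q))"
      using q1 a2 by (simp add: l0'_def q_def power2_eq_square field_simps)
    also have "\<dots> \<le> - ((z / 2) * l)"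
    proof -
      define s where "s = 1 - r"
      have s0: "0 < s" "s \<le> 1" using False r0 by (auto simp: s_def)
      have lb: "l * (1 + p * s) \<le> 1"
      proof -
        have "ln r \<le> r - 1" using r0 by (rule ln_le_minus_one)
        then have "p * ln r \<le> p * (r - 1)" using p1 by (intro mult_left_mono) auto
        then have "p * ln r \<le> - (p * s)" by (simp add: s_def algebra_simps)
        then have "l \<le> exp (- (p * s))" using r0 by (simp add: l_def powr_def)
        moreover have "1 + p * s \<le> exp (p * s)" by (rule exp_ge_add_one_self)
        ultimately have "l * (1 + p * s) \<le> exp (- (p * s)) * exp (p * s)"
          using p1 s0 l0 by (intro mult_mono) auto
        then show ?thesis by (simp add: exp_minus)
      qed
      have poly: "z \<le> 2 * y * (1 + p * s)"
      proof -
        define w where "w = 2 * q + p - y"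
        have w0: "0 \<le> w" "w \<le> p"
        proof -
          have "r < 1" using False by simp
          then have "z < 2 * A" using A0 by (simp add: r_def)
          then show "0 \<le> w" by (simp add: w_def z_def A_def)
          show "w \<le> p" using yq by (simp add: w_def)
        qed
        have sw: "s = w / (2 * A)" using A0 by (simp add: s_def r_def w_def z_def A_def field_simps)
        have key: "0 \<le> 2 * q * A + (p - 1) * w * A + p * w * q - p * w^2"
        proof -
          have "(p - 1) * w * A + p * w * q - p * w^2 = w * ((p - 1) * (q + p) + p * q - p * w)"
            by (simp add: A_def power2_eq_square algebra_simps)
          also have "\<dots> \<ge> w * ((p - 1) * (q + p) + p * q - p * p)"
            using w0 p1 by (intro mult_left_mono) (auto simp: mult_left_mono)
          also have "(p - 1) * (q + p) + p * q - p * p = p * (q - 1) + q * (p - 1)"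
            by (simp add: algebra_simps)
          finally have "w * (p * (q - 1) + q * (p - 1)) \<le> (p - 1) * w * A + p * w * q - p * w^2" .
          moreover have "0 \<le> w * (p * (q - 1) + q * (p - 1))" using w0 p1 q1 by simp
          moreover have "0 \<le> 2 * q * A" using q1 A0 by simp
          ultimately show ?thesis by linarith
        qed
        have "2 * y * (1 + p * s) - z = (2 * q * A + (p - 1) * w * A + p * w * q - p * w^2) / A"
          using A0 by (simp add: sw w_def z_def A_def power2_eq_square field_simps)
        also have "\<dots> \<ge> 0" using key A0 by simp
        finally show ?thesis by simp
      qed
      have ps0: "1 + p * s > 0" using p1 s0 by (simp add: add_pos_nonneg)
      have "(z / 2) * l \<le> y"
      proof -
        have "(z / 2) * l * (1 + p * s) \<le> (z / 2) * 1"
          using mult_left_mono[OF lb, of "z / 2"] z0 by (simp only: mult.assoc)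
        also have "\<dots> \<le> y * (1 + p * s)" using poly by simp
        finally show ?thesis using ps0 by simp
      qed
      also have "y \<le> y^2 / (2 * q)"
        using yq q1 by (simp add: power2_eq_square field_simps mult_right_mono)
      finally show ?thesis by simp
    qed
    finally show ?thesis using l0'0 goal_eq by (intro exI[of _ l0']) auto
  qed
qed

lemma lower_real:
  fixes a y :: real and \<psi> :: "real \<Rightarrow> real"
  assumes a1: "1 < a" and a2: "a < 2" and y: "y \<ge> 2 / (2 - a)"
    and U2: "\<And>m. m \<ge> 1 \<Longrightarrow> \<psi> (-m) \<le> (1 / (2 - a) + 1 / (a - 1)) * m powr a - m / (a - 1)"
    and L: "\<And>m. m \<ge> 1 \<Longrightarrow> ((1 / (2 - a) + 1 / (a - 1)) * m powr a - m / (a - 1)) / exp 1 \<le> \<psi> (-m)"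
  shows "\<exists>l\<ge>1. (1 / exp 1 - 1/4) * y \<le> (\<psi> (-l) - 1/2) / l \<and>
     \<psi> (-(2 * l)) - 2 * \<psi> (-l) \<le> (sqrt (4 - 2 / exp 1) * (y + 1 / (a - 1))) powr (a / (a - 1))
                    / ((1 / (2 - a) + 1 / (a - 1)) powr (1 / (a - 1)))"
proof -
  define p where "p = 1 / (a - 1)"
  define q where "q = 1 / (2 - a)"
  define A where "A = q + p"
  define z where "z = y + p"
  define D where "D = 4 - 2 / exp (1::real)"
  define c where "c = D powr ((p - 1) / (2 * (p + 1)))"
  define l where "l = (c * z / A) powr p"
  have p1: "p > 1" using a1 a2 by (simp add: p_def)
  have q1: "q > 1" using a1 a2 by (simp add: q_def)
  have yq: "y \<ge> 2 * q" using y by (simp add: q_def)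
  have ap: "a / (a - 1) = p + 1" using a1 by (simp add: p_def field_simps)
  have A0: "A > 0" using p1 q1 by (simp add: A_def)
  have z0: "z > 0" using yq q1 p1 by (simp add: z_def)
  have zA: "z \<ge> A" using yq q1 by (simp add: z_def A_def)
  have e2: "exp (1::real) \<ge> 2" using exp_ge_add_one_self[of "1::real"] by simp
  have D1: "D \<ge> 3" using e2 by (simp add: D_def field_simps)
  have c1: "c \<ge> 1" unfolding c_def using D1 p1 by (intro ge_one_powr_ge_zero) auto
  have czA: "c * z / A \<ge> 1"
  proof -
    have "1 * z \<le> c * z" using c1 z0 by (intro mult_right_mono) auto
    then have "A \<le> c * z" using zA by simp
    then show ?thesis using A0 by simp
  qed
  have l1: "l \<ge> 1" unfolding l_def using czA p1 by (intro ge_one_powr_ge_zero) auto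
  have l0: "l > 0" using l1 by simp
  have la1: "l powr (a - 1) = c * z / A"
  proof -
    have "l powr (a - 1) = (c * z / A) powr (p * (a - 1))" by (simp add: l_def powr_powr)
    also have "p * (a - 1) = 1" using a1 by (simp add: p_def)
    finally show ?thesis using czA A0 c1 z0 by simp
  qed
  have la: "A * l powr a = c * z * l"
  proof -
    have "l powr a = l powr ((a - 1) + 1)" by simp
    also have "\<dots> = l powr (a - 1) * l powr 1" by (rule powr_add)
    finally have "l powr a = c * z / A * l" using la1 l0 by simp
    then show ?thesis using A0 by simp
  qed
  have ly: "(1 / exp 1 - 1/4) * y \<le> (\<psi> (-l) - 1/2) / l"
  proof -
    have "l * y / exp 1 \<le> (A * l powr a - l / (a - 1)) / exp 1"
    proof (rule divide_right_mono)
      have "l * y = l * (z - p)" by (simp add: z_def)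
      also have "\<dots> \<le> l * (c * z - p)" using c1 z0 l0 by (intro mult_left_mono) (auto simp: mult_le_cancel_right1)
      also have "\<dots> = A * l powr a - l / (a - 1)" using la by (simp add: p_def algebra_simps)
      finally show "l * y \<le> A * l powr a - l / (a - 1)" .
    qed simp
    also have "\<dots> \<le> \<psi> (-l)" using L[OF l1] by (simp add: A_def p_def q_def)
    finally have h: "l * y / exp 1 \<le> \<psi> (-l)" .
    have y2: "y \<ge> 2" using yq q1 by simp
    have "1 * 2 \<le> l * y" using l1 y2 by (intro mult_mono) auto
    then have "2 \<le> l * y" by simp
    moreover have eq: "(1 / exp 1 - 1/4) * y * l = l * y / exp 1 - l * y / 4"
      by (simp add: field_simps)
    ultimately have "(1 / exp 1 - 1/4) * y * l \<le> \<psi> (-l) - 1/2"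
      using h by linarith
    then show ?thesis using l0 by (simp add: field_simps)
  qed
  have lb: "\<psi> (-(2 * l)) - 2 * \<psi> (-l) \<le> A * l powr a * D"
  proof -
    have l21: "2 * l \<ge> 1" using l1 by simp
    have p2: "(2 * l) powr a \<le> 4 * l powr a"
    proof -
      have "(2 * l) powr a = 2 powr a * l powr a" using l0 by (simp add: powr_mult)
      also have "2 powr a \<le> (2::real) powr 2" using a2 by (intro powr_mono) auto
      then have "2 powr a * l powr a \<le> 4 * l powr a" by (intro mult_right_mono) auto
      finally show ?thesis .
    qed
    have "\<psi> (-(2 * l)) \<le> A * (2 * l) powr a - 2 * l * p"
      using U2[OF l21] by (simp add: A_def p_def q_def)
    also have "\<dots> \<le> A * (4 * l powr a) - 2 * l * p" using p2 A0 by simp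
    finally have h1: "\<psi> (-(2 * l)) \<le> 4 * (A * l powr a) - 2 * l * p" by simp
    have h2: "(A * l powr a - l * p) / exp 1 \<le> \<psi> (-l)" using L[OF l1] by (simp add: A_def p_def q_def)
    have "\<psi> (-(2 * l)) - 2 * \<psi> (-l) \<le> 4 * (A * l powr a) - 2 * l * p - 2 * ((A * l powr a - l * p) / exp 1)"
      using h1 h2 by linarith
    also have "\<dots> = A * l powr a * D - 2 * l * p * (1 - 1 / exp 1)"
      by (simp add: D_def field_simps)
    also have "\<dots> \<le> A * l powr a * D"
    proof -
      have "1 / exp 1 \<le> (1::real)" using e2 by simp
      then show ?thesis using l0 p1 by simp
    qed
    finally show ?thesis .
  qed
  have Beq: "A * l powr a * D = (sqrt D * z) powr (p + 1) / A powr p"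
  proof -
    have lp: "l = c powr p * z powr p / A powr p" using c1 z0 A0 by (simp add: l_def powr_divide powr_mult)
    have cp: "c * c powr p = D powr ((p - 1) / 2)"
    proof -
      have "c * c powr p = c powr (p + 1)" using c1 by (simp add: powr_add)
      also have "\<dots> = D powr ((p - 1) / (2 * (p + 1)) * (p + 1))" by (simp add: c_def powr_powr)
      also have "(p - 1) / (2 * (p + 1)) * (p + 1) = (p - 1) / 2" using p1 by (simp add: field_simps)
      finally show ?thesis .
    qed
    have sq: "sqrt D powr (p + 1) = D * D powr ((p - 1) / 2)"
    proof -
      have "sqrt D = D powr (1/2)" using D1 by (simp add: powr_half_sqrt)
      then have "sqrt D powr (p + 1) = D powr ((p + 1) / 2)" by (simp add: powr_powr)
      also have "(p + 1) / 2 = 1 + (p - 1) / 2" by (simp add: field_simps)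
      also have "D powr \<dots> = D * D powr ((p - 1) / 2)" using D1 by (simp add: powr_add)
      finally show ?thesis .
    qed
    have zp: "z powr (p + 1) = z * z powr p" using z0 by (simp add: powr_add)
    have "A * l powr a * D = c * z * l * D" using la by simp
    also have "\<dots> = (c * c powr p) * D * (z * z powr p) / A powr p" using lp by (simp add: field_simps)
    also have "\<dots> = (sqrt D powr (p + 1)) * (z powr (p + 1)) / A powr p" using cp sq zp by (simp add: mult_ac)
    also have "\<dots> = (sqrt D * z) powr (p + 1) / A powr p" using z0 D1 by (simp add: powr_mult)
    finally show ?thesis .
  qed
  have goal_eq: "(sqrt (4 - 2 / exp 1) * (y + 1 / (a - 1))) powr (a / (a - 1)) / ((1 / (2 - a) + 1 / (a - 1)) powr (1 / (a - 1)))
      = (sqrt D * z) powr (p + 1) / A powr p"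
    by (simp add: ap D_def z_def A_def p_def q_def)
  show ?thesis using l1 ly lb unfolding goal_eq Beq[symmetric] by blast
qed

lemma PZ:
  fixes M :: "'a measure" and Y :: "'a \<Rightarrow> real" and \<theta> :: real
  assumes P: "prob_space M" and Ym: "Y \<in> borel_measurable M" and Y0: "\<And>\<omega>. \<omega> \<in> space M \<Longrightarrow> 0 \<le> Y \<omega>"
    and iY: "integrable M Y" and iY2: "integrable M (\<lambda>\<omega>. (Y \<omega>)^2)"
    and th0: "0 \<le> \<theta>" and th1: "\<theta> < 1" and m0: "0 < (\<integral>\<omega>. Y \<omega> \<partial>M)"
  shows "(1 - \<theta>)^2 * (\<integral>\<omega>. Y \<omega> \<partial>M)^2 / (\<integral>\<omega>. (Y \<omega>)^2 \<partial>M)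
           \<le> measure M {\<omega> \<in> space M. \<theta> * (\<integral>\<omega>. Y \<omega> \<partial>M) < Y \<omega>}"
proof -
  interpret prob_space M by (rule P)
  define m where "m = (\<integral>\<omega>. Y \<omega> \<partial>M)"
  define v where "v = (\<integral>\<omega>. (Y \<omega>)^2 \<partial>M)"
  define B where "B = {\<omega> \<in> space M. \<theta> * m < Y \<omega>}"
  have Bm: "B \<in> sets M" unfolding B_def using Ym by measurable
  define PB where "PB = measure M B"
  have v0: "0 \<le> v" unfolding v_def by (rule integral_nonneg_AE) auto
  have PB0: "0 \<le> PB" by (simp add: PB_def)
  have key: "m \<le> \<theta> * m + (t * v + PB / t) / 2" if t: "t > 0" for t
  proof -
    have "m = (\<integral>\<omega>. Y \<omega> \<partial>M)" by (simp add: m_def)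
    also have "\<dots> \<le> (\<integral>\<omega>. \<theta> * m + (t * (Y \<omega>)^2 + indicator B \<omega> / t) / 2 \<partial>M)"
    proof (rule integral_mono)
      show "integrable M Y" by (rule iY)
      show "integrable M (\<lambda>\<omega>. \<theta> * m + (t * (Y \<omega>)^2 + indicator B \<omega> / t) / 2)"
      proof -
        have i1: "integrable M (\<lambda>\<omega>. t * (Y \<omega>)^2)" using iY2 by simp
        have i2: "integrable M (\<lambda>\<omega>. indicator B \<omega> / t :: real)"
          using Bm by (intro integrable_divide_zero integrable_real_indicator) (auto simp: emeasure_eq_measure)
        show ?thesis
          by (intro Bochner_Integration.integrable_add integrable_divide_zero i1 i2 integrable_const)
      qed
      fix \<omega> assume \<omega>: "\<omega> \<in> space M"
      have tm: "0 \<le> \<theta> * m" using th0 m0 by (simp add: m_def)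
      show "Y \<omega> \<le> \<theta> * m + (t * (Y \<omega>)^2 + indicator B \<omega> / t) / 2"
      proof (cases "\<omega> \<in> B")
        case True
        have "0 \<le> (t * Y \<omega> - 1)^2" by simp
        then have "2 * t * Y \<omega> \<le> t^2 * (Y \<omega>)^2 + 1" by (simp add: power2_eq_square algebra_simps)
        then have "Y \<omega> \<le> (t * (Y \<omega>)^2 + 1 / t) / 2" using t by (simp add: field_simps power2_eq_square)
        then have "Y \<omega> \<le> \<theta> * m + (t * (Y \<omega>)^2 + 1 / t) / 2" using tm by linarith
        then show ?thesis using True by simp
      next
        case False
        then have "Y \<omega> \<le> \<theta> * m" using \<omega> by (auto simp: B_def)
        moreover have "0 \<le> (t * (Y \<omega>)^2 + indicator B \<omega> / t) / 2" using t by simp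
        ultimately show ?thesis by linarith
      qed
    qed
    also have "\<dots> = \<theta> * m + (t * v + PB / t) / 2"
    proof -
      have "(\<integral>\<omega>. \<theta> * m + (t * (Y \<omega>)^2 + indicator B \<omega> / t) / 2 \<partial>M)
          = \<theta> * m + ((\<integral>\<omega>. t * (Y \<omega>)^2 \<partial>M) + (\<integral>\<omega>. indicator B \<omega> / t \<partial>M)) / 2"
        using iY2 Bm by (simp add: integral_add integral_divide_zero emeasure_eq_measure prob_space)
      also have "(\<integral>\<omega>. t * (Y \<omega>)^2 \<partial>M) = t * v" by (simp add: v_def)
      also have "(\<integral>\<omega>. indicator B \<omega> / t \<partial>M) = PB / t"
        using Bm sets.sets_into_space[OF Bm] by (simp add: PB_def Int_absorb2)
      finally show ?thesis .
    qed
    finally show ?thesis .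
  qed
  show ?thesis
  proof (cases "v = 0")
    case True
    then have "(\<integral>\<omega>. (Y \<omega>)^2 \<partial>M) = 0" by (simp add: v_def)
    then show ?thesis by simp
  next
    case False
    with v0 have vp: "v > 0" by simp
    define u where "u = (1 - \<theta>) * m"
    define t where "t = u / v"
    have mp: "m > 0" using m0 by (simp add: m_def)
    have up: "u > 0" using th1 mp by (simp add: u_def)
    have tp: "t > 0" using up vp by (simp add: t_def)
    have k: "m \<le> \<theta> * m + (t * v + PB / t) / 2" by (rule key[OF tp])
    have tv: "t * v = u" using vp by (simp add: t_def)
    have pt: "PB / t = PB * v / u" by (simp add: t_def)
    have mu: "m = \<theta> * m + u" by (simp add: u_def algebra_simps)
    from k have "\<theta> * m + u \<le> \<theta> * m + (u + PB * v / u) / 2" unfolding tv pt using mu by simp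
    then have "u \<le> PB * v / u" by simp
    then have "u * u \<le> PB * v" using up by (simp add: field_simps)
    then have "((1 - \<theta>) * m) * ((1 - \<theta>) * m) \<le> PB * v" by (simp add: u_def)
    then have "(1 - \<theta>)^2 * m^2 / v \<le> PB"
      using vp by (simp add: field_simps power2_eq_square)
    then show ?thesis by (simp add: m_def v_def PB_def B_def)
  qed
qed

theorem lemma11:
  fixes M :: "'a measure" and X :: "'a \<Rightarrow> real" and \<alpha> y :: real
  assumes "prob_space M"
    and "X \<in> borel_measurable M"
    and "1 < \<alpha>" and "\<alpha> < 2"
    and "\<And>t. char (distr M borel X) t =
           exp (CLBINT x:{0<..1}. (iexp (t * x) - 1 - \<i> * complex_of_real (t * x))
                                   / complex_of_real (x powr (\<alpha> + 1)))"
    and "y \<ge> 2 / (2 - \<alpha>)"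
  shows "measure M {\<omega> \<in> space M. X \<omega> \<le> - y}
           \<le> exp (- (((1/2) * (y + 1 / (\<alpha> - 1))) powr (\<alpha> / (\<alpha> - 1))
                    / ((1 / (2 - \<alpha>) + 1 / (\<alpha> - 1)) powr (1 / (\<alpha> - 1)))))
    \<and> measure M {\<omega> \<in> space M. X \<omega> \<le> - ((1 / exp 1 - 1/4) * y)}
           \<ge> (1 - 1 / sqrt (exp 1))\<^sup>2
              * exp (- ((sqrt (4 - 2 / exp 1) * (y + 1 / (\<alpha> - 1))) powr (\<alpha> / (\<alpha> - 1))
                    / ((1 / (2 - \<alpha>) + 1 / (\<alpha> - 1)) powr (1 / (\<alpha> - 1)))))"
proof -
  note a1 = assms(3) and a2 = assms(4) and yb = assms(6)
  interpret P: prob_space M by (rule assms(1))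
  have Xm [measurable]: "X \<in> borel_measurable M" by (rule assms(2))
  define \<mu> where "\<mu> = distr M borel X"
  have rd: "real_distribution \<mu>" unfolding \<mu>_def using Xm by (simp add: P.real_distribution_distr)
  have ch: "char \<mu> t = Phi \<alpha> (\<i> * of_real t)" for t
  proof -
    have "Psi \<alpha> (\<i> * of_real t) = (CLBINT x:{0<..1}. (iexp (t * x) - 1 - \<i> * complex_of_real (t * x))
                                   / complex_of_real (x powr (\<alpha> + 1)))"
      unfolding Psi_def[OF a1 a2] set_lebesgue_integral_def
      by (intro Bochner_Integration.integral_cong refl) (simp add: mult_ac)
    then show ?thesis using assms(5)[of t] by (simp add: Phi_def[OF a1 a2] \<mu>_def)
  qed
  have momI: "integrable M (\<lambda>\<omega>. exp (u * X \<omega>))" for u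
    using exp_moment(1)[OF a1 a2 rd ch, of u] unfolding \<mu>_def by (subst (asm) integrable_distr_eq) auto
  have momE: "(\<integral>\<omega>. exp (u * X \<omega>) \<partial>M) = exp (psir \<alpha> u)" for u
    using exp_moment(2)[OF a1 a2 rd ch, of u] unfolding \<mu>_def by (subst (asm) integral_distr) auto
  have U1: "psir \<alpha> (-m) \<le> m^2 / (2 * (2 - \<alpha>))" if "m \<ge> 0" for m using psir_le1[OF a1 a2 that] .
  have U2: "psir \<alpha> (-m) \<le> (1 / (2 - \<alpha>) + 1 / (\<alpha> - 1)) * m powr \<alpha> - m / (\<alpha> - 1)" if "m \<ge> 1" for m
    using psir_le2[OF a1 a2 that] .
  have L: "((1 / (2 - \<alpha>) + 1 / (\<alpha> - 1)) * m powr \<alpha> - m / (\<alpha> - 1)) / exp 1 \<le> psir \<alpha> (-m)" if "m \<ge> 1" for m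
    using psir_ge[OF a1 a2 that] .
  have part1: "measure M {\<omega> \<in> space M. X \<omega> \<le> - y}
           \<le> exp (- (((1/2) * (y + 1 / (\<alpha> - 1))) powr (\<alpha> / (\<alpha> - 1))
                    / ((1 / (2 - \<alpha>) + 1 / (\<alpha> - 1)) powr (1 / (\<alpha> - 1)))))"
  proof -
    obtain l where l0: "l \<ge> 0" and lT: "- l * y + psir \<alpha> (-l) \<le> - (((1/2) * (y + 1 / (\<alpha> - 1))) powr (\<alpha> / (\<alpha> - 1))
                    / ((1 / (2 - \<alpha>) + 1 / (\<alpha> - 1)) powr (1 / (\<alpha> - 1))))"
      using upper_real[OF a1 a2 yb U1 U2] by blast
    define S where "S = {\<omega> \<in> space M. X \<omega> \<le> - y}"
    have Sm: "S \<in> sets M" unfolding S_def by measurable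
    have "measure M S = (\<integral>\<omega>. indicator S \<omega> \<partial>M)"
      using Sm sets.sets_into_space[OF Sm] by (simp add: Int_absorb2)
    also have "\<dots> \<le> (\<integral>\<omega>. exp ((-l) * X \<omega>) * exp (- l * y) \<partial>M)"
    proof (rule integral_mono)
      show "integrable M (indicator S :: 'a \<Rightarrow> real)"
        using Sm by (intro integrable_real_indicator) (auto simp: P.emeasure_eq_measure)
      show "integrable M (\<lambda>\<omega>. exp ((-l) * X \<omega>) * exp (- l * y))"
        using momI[of "-l"] by simp
      fix \<omega> assume \<omega>: "\<omega> \<in> space M"
      show "indicator S \<omega> \<le> exp ((-l) * X \<omega>) * exp (- l * y)"
      proof (cases "\<omega> \<in> S")
        case True
        then have "X \<omega> \<le> - y" by (simp add: S_def)
        then have h0: "0 \<le> - X \<omega> - y" by simp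
        have "(-l) * X \<omega> + (- l * y) = l * (- X \<omega> - y)" by (simp add: algebra_simps)
        also have "\<dots> \<ge> 0" using l0 h0 by simp
        finally have "0 \<le> (-l) * X \<omega> + (- l * y)" .
        then have "1 \<le> exp ((-l) * X \<omega> + (- l * y))" by simp
        also have "\<dots> = exp ((-l) * X \<omega>) * exp (- l * y)" by (rule exp_add)
        finally show ?thesis using True by simp
      qed simp
    qed
    also have "\<dots> = exp (psir \<alpha> (-l)) * exp (- l * y)"
      using momE[of "-l"] by simp
    also have "\<dots> = exp (- l * y + psir \<alpha> (-l))" by (simp add: exp_add[symmetric] mult.commute)
    also have "\<dots> \<le> exp (- (((1/2) * (y + 1 / (\<alpha> - 1))) powr (\<alpha> / (\<alpha> - 1))
                    / ((1 / (2 - \<alpha>) + 1 / (\<alpha> - 1)) powr (1 / (\<alpha> - 1)))))"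
      using lT by simp
    finally show ?thesis by (simp add: S_def)
  qed
  have part2: "measure M {\<omega> \<in> space M. X \<omega> \<le> - ((1 / exp 1 - 1/4) * y)}
           \<ge> (1 - 1 / sqrt (exp 1))\<^sup>2
              * exp (- ((sqrt (4 - 2 / exp 1) * (y + 1 / (\<alpha> - 1))) powr (\<alpha> / (\<alpha> - 1))
                    / ((1 / (2 - \<alpha>) + 1 / (\<alpha> - 1)) powr (1 / (\<alpha> - 1)))))"
  proof -
    define B where "B = (sqrt (4 - 2 / exp 1) * (y + 1 / (\<alpha> - 1))) powr (\<alpha> / (\<alpha> - 1))
                    / ((1 / (2 - \<alpha>) + 1 / (\<alpha> - 1)) powr (1 / (\<alpha> - 1)))"
    obtain l where l1: "l \<ge> 1" and la: "(1 / exp 1 - 1/4) * y \<le> (psir \<alpha> (-l) - 1/2) / l"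
        and lb: "psir \<alpha> (-(2 * l)) - 2 * psir \<alpha> (-l) \<le> B"
      using lower_real[OF a1 a2 yb U2 L] unfolding B_def by blast
    define \<theta> where "\<theta> = 1 / sqrt (exp (1::real))"
    have sq: "sqrt (exp (1::real)) = exp (1/2)"
      by (rule real_sqrt_unique) (simp_all add: power2_eq_square exp_add[symmetric])
    have th: "\<theta> = exp (- 1/2)" by (simp add: \<theta>_def sq exp_minus inverse_eq_divide)
    have th0: "0 \<le> \<theta>" by (simp add: th)
    have th1: "\<theta> < 1" by (simp add: th)
    define Y where "Y \<omega> = exp ((-l) * X \<omega>)" for \<omega>
    have Y2: "(Y \<omega>)^2 = exp ((-(2 * l)) * X \<omega>)" for \<omega>
      by (simp add: Y_def power2_eq_square exp_add[symmetric])
    have EY: "(\<integral>\<omega>. Y \<omega> \<partial>M) = exp (psir \<alpha> (-l))" unfolding Y_def by (rule momE)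
    have EY2: "(\<integral>\<omega>. (Y \<omega>)^2 \<partial>M) = exp (psir \<alpha> (-(2 * l)))" unfolding Y2 by (rule momE)
    have pz: "(1 - \<theta>)^2 * (\<integral>\<omega>. Y \<omega> \<partial>M)^2 / (\<integral>\<omega>. (Y \<omega>)^2 \<partial>M)
           \<le> measure M {\<omega> \<in> space M. \<theta> * (\<integral>\<omega>. Y \<omega> \<partial>M) < Y \<omega>}"
    proof (rule PZ[OF assms(1) _ _ _ _ th0 th1])
      show "Y \<in> borel_measurable M" unfolding Y_def by measurable
      show "0 \<le> Y \<omega>" for \<omega> by (simp add: Y_def)
      show "integrable M Y" unfolding Y_def by (rule momI)
      show "integrable M (\<lambda>\<omega>. (Y \<omega>)^2)" unfolding Y2 by (rule momI)
      show "0 < (\<integral>\<omega>. Y \<omega> \<partial>M)" by (simp add: EY)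
    qed
    have lhs: "(1 - 1 / sqrt (exp 1))\<^sup>2 * exp (- B) \<le> (1 - \<theta>)^2 * (\<integral>\<omega>. Y \<omega> \<partial>M)^2 / (\<integral>\<omega>. (Y \<omega>)^2 \<partial>M)"
    proof -
      have "(\<integral>\<omega>. Y \<omega> \<partial>M)^2 / (\<integral>\<omega>. (Y \<omega>)^2 \<partial>M) = exp (2 * psir \<alpha> (-l) - psir \<alpha> (-(2 * l)))"
        unfolding EY EY2 by (simp add: power2_eq_square exp_diff exp_add[symmetric])
      also have "\<dots> \<ge> exp (- B)" using lb by simp
      finally have "exp (- B) \<le> (\<integral>\<omega>. Y \<omega> \<partial>M)^2 / (\<integral>\<omega>. (Y \<omega>)^2 \<partial>M)" .
      then have "(1 - \<theta>)^2 * exp (- B) \<le> (1 - \<theta>)^2 * ((\<integral>\<omega>. Y \<omega> \<partial>M)^2 / (\<integral>\<omega>. (Y \<omega>)^2 \<partial>M))"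
        by (rule mult_left_mono) simp
      then show ?thesis by (simp add: \<theta>_def)
    qed
    have sub: "{\<omega> \<in> space M. \<theta> * (\<integral>\<omega>. Y \<omega> \<partial>M) < Y \<omega>} \<subseteq> {\<omega> \<in> space M. X \<omega> \<le> - ((1 / exp 1 - 1/4) * y)}"
    proof safe
      fix \<omega> assume \<omega>: "\<omega> \<in> space M" and lt: "\<theta> * (\<integral>\<omega>. Y \<omega> \<partial>M) < Y \<omega>"
      have "\<theta> * exp (psir \<alpha> (-l)) < Y \<omega>" using lt by (simp only: EY)
      then have "exp (- 1/2) * exp (psir \<alpha> (-l)) < exp ((-l) * X \<omega>)" by (simp only: th Y_def)
      then have "exp (- 1/2 + psir \<alpha> (-l)) < exp ((-l) * X \<omega>)" by (simp only: exp_add)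
      then have "- 1/2 + psir \<alpha> (-l) < (-l) * X \<omega>" by simp
      then have "X \<omega> * l < - (psir \<alpha> (-l) - 1/2)" by (simp add: algebra_simps)
      then have "X \<omega> < - ((psir \<alpha> (-l) - 1/2) / l)" using l1 by (simp add: field_simps)
      also have "\<dots> \<le> - ((1 / exp 1 - 1/4) * y)" using la by simp
      finally show "X \<omega> \<le> - ((1 / exp 1 - 1/4) * y)" by simp
    qed
    have "measure M {\<omega> \<in> space M. \<theta> * (\<integral>\<omega>. Y \<omega> \<partial>M) < Y \<omega>} \<le> measure M {\<omega> \<in> space M. X \<omega> \<le> - ((1 / exp 1 - 1/4) * y)}"
      by (rule P.finite_measure_mono[OF sub]) measurable
    with lhs pz show ?thesis unfolding B_def by linarith
  qed
  show ?thesis using part1 part2 by blast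
qed

end
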